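(* Let $G$ be a graph with $k=\chi(G)$ that has, up to permutation of the colours, exactly two proper $k$-colourings (i.e. exactly two partitions of $V(G)$ into $k$ independent sets). Then for every proper $k$-colouring $c$ of $G$ there exists a critical set for $(G,c)$ of cardinality $\chi(G)$.
   Context: All graphs are finite and simple. A proper $k$-colouring of $G=(V,E)$ is a map $c:V\to[k]$ with $c(u)\neq c(v)$ for every edge $uv$. A set $S\subseteq V$ is a determining set for $(G,c)$ if there is no proper $k$-colouring $c'\neq c$ of $G$ with $c'(s)=c(s)$ for all $s\in S$; a critical set for $(G,c)$ is an inclusion-minimal determining set. *)

theory Defs
  imports Main
begin

definition simple_graph :: "'a set \<Rightarrow> ('a \<Rightarrow> 'a \<Rightarrow> bool) \<Rightarrow> bool" where
  "simple_graph V E \<longleftrightarrow> finite V \<and> (\<forall>u v. E u v \<longrightarrow> E v u) \<and> (\<forall>v. \<not> E v v)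
     \<and> (\<forall>u v. E u v \<longrightarrow> u \<in> V \<and> v \<in> V)"

definition proper_col :: "'a set \<Rightarrow> ('a \<Rightarrow> 'a \<Rightarrow> bool) \<Rightarrow> nat \<Rightarrow> ('a \<Rightarrow> nat) \<Rightarrow> bool" where
  "proper_col V E k c \<longleftrightarrow> (\<forall>v\<in>V. c v \<in> {1..k}) \<and> (\<forall>u\<in>V. \<forall>v\<in>V. E u v \<longrightarrow> c u \<noteq> c v)"

definition chromatic_number :: "'a set \<Rightarrow> ('a \<Rightarrow> 'a \<Rightarrow> bool) \<Rightarrow> nat" where
  "chromatic_number V E = (LEAST k. \<exists>c. proper_col V E k c)"

definition colour_partition :: "'a set \<Rightarrow> nat \<Rightarrow> ('a \<Rightarrow> nat) \<Rightarrow> 'a set set" where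
  "colour_partition V k c = {{v \<in> V. c v = i} | i. i \<in> {1..k}} - {{}}"

definition determining_set ::
  "'a set \<Rightarrow> ('a \<Rightarrow> 'a \<Rightarrow> bool) \<Rightarrow> nat \<Rightarrow> ('a \<Rightarrow> nat) \<Rightarrow> 'a set \<Rightarrow> bool" where
  "determining_set V E k c S \<longleftrightarrow> S \<subseteq> V \<and>
     \<not> (\<exists>c'. proper_col V E k c' \<and> (\<exists>v\<in>V. c' v \<noteq> c v) \<and> (\<forall>s\<in>S. c' s = c s))"

definition critical_set ::
  "'a set \<Rightarrow> ('a \<Rightarrow> 'a \<Rightarrow> bool) \<Rightarrow> nat \<Rightarrow> ('a \<Rightarrow> nat) \<Rightarrow> 'a set \<Rightarrow> bool" where
  "critical_set V E k c S \<longleftrightarrow> determining_set V E k c S \<and>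
     (\<forall>T. T \<subset> S \<longrightarrow> \<not> determining_set V E k c T)"

end

theory Submission
  imports Defs
begin


lemma hall:
  assumes "finite I" "\<forall>i\<in>I. finite (F i)"
    and "\<forall>J. J \<subseteq> I \<longrightarrow> card J \<le> card (\<Union>(F ` J))"
  shows "\<exists>f. inj_on f I \<and> (\<forall>i\<in>I. f i \<in> F i)"
  using assms
proof (induction "card I" arbitrary: I F rule: less_induct)
  case less
  note fin = less.prems(1) and finF = less.prems(2) and H = less.prems(3)
  show ?case
  proof (cases "I = {}")
    case True then show ?thesis by auto
  next
    case Ine: False
    show ?thesis
    proof (cases "\<exists>J. J \<noteq> {} \<and> J \<subset> I \<and> card (\<Union>(F ` J)) \<le> card J")
      case True
      then obtain J where J: "J \<noteq> {}" "J \<subset> I" "card (\<Union>(F ` J)) \<le> card J" by blast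
      have finJ: "finite J" using J fin finite_subset by blast
      have "card J < card I" using J fin psubset_card_mono by blast
      moreover have "\<forall>i\<in>J. finite (F i)" using J finF by blast
      moreover have "\<forall>K. K \<subseteq> J \<longrightarrow> card K \<le> card (\<Union>(F ` K))" using J H by blast
      ultimately obtain f1 where f1: "inj_on f1 J" "\<forall>i\<in>J. f1 i \<in> F i"
        using less.hyps finJ by blast
      define U where "U = \<Union>(F ` J)"
      define F2 where "F2 = (\<lambda>i. F i - U)"
      have finU: "finite U" unfolding U_def using finJ J finF by blast
      have "I - J \<subset> I" using J by blast
      then have "card (I - J) < card I" using fin psubset_card_mono by blast
      moreover have "finite (I - J)" using fin by blast
      moreover have "\<forall>i\<in>I - J. finite (F2 i)" using finF F2_def by blast
      moreover have "\<forall>K. K \<subseteq> I - J \<longrightarrow> card K \<le> card (\<Union>(F2 ` K))"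
      proof (intro allI impI)
        fix K assume K: "K \<subseteq> I - J"
        have finK: "finite K" using K fin finite_subset by blast
        have eq: "\<Union>(F2 ` K) = \<Union>(F ` (K \<union> J)) - U" unfolding F2_def U_def by blast
        have sub: "U \<subseteq> \<Union>(F ` (K \<union> J))" unfolding U_def by blast
        have finKJ: "finite (\<Union>(F ` (K \<union> J)))" using finK finJ K J finF by blast
        have c1: "card (\<Union>(F2 ` K)) = card (\<Union>(F ` (K \<union> J))) - card U"
          using eq sub finKJ card_Diff_subset finite_subset by metis
        have "K \<union> J \<subseteq> I" using K J by blast
        then have c2: "card (K \<union> J) \<le> card (\<Union>(F ` (K \<union> J)))" using H by blast
        have c3: "card (K \<union> J) = card K + card J"
          using K finK finJ card_Un_disjoint by (metis Diff_disjoint disjoint_iff subsetD)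
        have "card U \<le> card J" using J U_def by simp
        then show "card K \<le> card (\<Union>(F2 ` K))" using c1 c2 c3 by linarith
      qed
      ultimately obtain f2 where f2: "inj_on f2 (I - J)" "\<forall>i\<in>I - J. f2 i \<in> F2 i"
        using less.hyps by blast
      define f where "f = (\<lambda>i. if i \<in> J then f1 i else f2 i)"
      have "inj_on f I"
      proof (rule inj_onI)
        fix a b assume ab: "a \<in> I" "b \<in> I" "f a = f b"
        show "a = b"
        proof (cases "a \<in> J"; cases "b \<in> J")
          assume "a \<in> J" "b \<in> J" then show ?thesis using ab f1(1) unfolding f_def inj_on_def by simp
        next
          assume "a \<notin> J" "b \<notin> J" then show ?thesis using ab f2(1) unfolding f_def inj_on_def by simp
        next
          assume "a \<in> J" "b \<notin> J"
          then have "f a \<in> U" "f b \<notin> U" using f1(2) f2(2) ab(1,2) unfolding f_def U_def F2_def by auto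
          then show ?thesis using ab by simp
        next
          assume "a \<notin> J" "b \<in> J"
          have "f b \<in> U" using \<open>b \<in> J\<close> f1(2) unfolding f_def U_def by auto
          moreover have "f a \<notin> U" using \<open>a \<notin> J\<close> ab(1) f2(2) unfolding f_def F2_def by auto
          ultimately show ?thesis using ab by simp
        qed
      qed
      moreover have "\<forall>i\<in>I. f i \<in> F i"
      proof
        fix i assume "i \<in> I"
        then show "f i \<in> F i" using f1(2) f2(2) unfolding f_def F2_def by (cases "i \<in> J") auto
      qed
      ultimately show ?thesis by blast
    next
      case False
      have strict: "\<And>J. J \<noteq> {} \<Longrightarrow> J \<subset> I \<Longrightarrow> card J < card (\<Union>(F ` J))"
        using False by (meson not_le)
      obtain i0 where i0: "i0 \<in> I" using Ine by blast
      have "card {i0} \<le> card (\<Union>(F ` {i0}))" using H[rule_format, of "{i0}"] i0 by blast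
      then have "1 \<le> card (F i0)" by simp
      then have "F i0 \<noteq> {}" by (cases "F i0 = {}") simp_all
      then obtain x where x: "x \<in> F i0" by blast
      define F' where "F' = (\<lambda>i. F i - {x})"
      have "card (I - {i0}) < card I" using fin i0 by (meson card_Diff1_less)
      moreover have "finite (I - {i0})" using fin by blast
      moreover have "\<forall>i\<in>I - {i0}. finite (F' i)" using finF F'_def by blast
      moreover have "\<forall>K. K \<subseteq> I - {i0} \<longrightarrow> card K \<le> card (\<Union>(F' ` K))"
      proof (intro allI impI)
        fix K assume K: "K \<subseteq> I - {i0}"
        show "card K \<le> card (\<Union>(F' ` K))"
        proof (cases "K = {}")
          case True then show ?thesis by simp
        next
          case False
          have "K \<subset> I" using K i0 by blast
          then have lt: "card K < card (\<Union>(F ` K))" using strict False by blast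
          have eq: "\<Union>(F' ` K) = \<Union>(F ` K) - {x}" unfolding F'_def by blast
          have "card (\<Union>(F ` K)) - 1 \<le> card (\<Union>(F ` K) - {x})"
            by (simp add: card_Diff_singleton_if)
          then have "card K \<le> card (\<Union>(F ` K) - {x})" using lt by linarith
          then show ?thesis using eq by simp
        qed
      qed
      ultimately obtain f' where f': "inj_on f' (I - {i0})" "\<forall>i\<in>I - {i0}. f' i \<in> F' i"
        using less.hyps by blast
      define f where "f = f'(i0 := x)"
      have "inj_on f I"
      proof (rule inj_onI)
        fix a b assume ab: "a \<in> I" "b \<in> I" "f a = f b"
        show "a = b"
        proof (cases "a = i0"; cases "b = i0")
          assume "a \<noteq> i0" "b \<noteq> i0" then show ?thesis using ab f'(1) unfolding f_def inj_on_def by simp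
        next
          assume "a = i0" "b \<noteq> i0" then have "f b \<noteq> x" "f a = x" using f'(2) ab unfolding f_def F'_def by auto
          then show ?thesis using ab by simp
        next
          assume "a \<noteq> i0" "b = i0" then have "f a \<noteq> x" "f b = x" using f'(2) ab unfolding f_def F'_def by auto
          then show ?thesis using ab by simp
        qed simp
      qed
      moreover have "\<forall>i\<in>I. f i \<in> F i" using f' x unfolding f_def F'_def by auto
      ultimately show ?thesis by blast
    qed
  qed
qed

lemma all_colours_used:
  assumes "k = chromatic_number V E" "proper_col V E k c'" "j \<in> {1..k}"
  shows "\<exists>v\<in>V. c' v = j"
proof (rule ccontr)
  assume "\<not> (\<exists>v\<in>V. c' v = j)"
  then have nj: "\<forall>v\<in>V. c' v \<noteq> j" by blast
  define c'' where "c'' = (\<lambda>v. if c' v = k then j else c' v)"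
  have "proper_col V E (k - 1) c''"
    unfolding proper_col_def
  proof (intro conjI ballI impI)
    fix v assume "v \<in> V"
    then have a: "1 \<le> c' v" "c' v \<le> k" "c' v \<noteq> j" using assms(2) nj unfolding proper_col_def by auto
    have b: "1 \<le> j" "j \<le> k" using assms(3) by auto
    show "c'' v \<in> {1..k-1}"
    proof (cases "c' v = k")
      case True
      then have "c'' v = j" unfolding c''_def by simp
      moreover have "j \<noteq> k" using True a by simp
      ultimately show ?thesis using b by simp
    next
      case False
      then have "c'' v = c' v" unfolding c''_def by simp
      then show ?thesis using a False by simp
    qed
  next
    fix u v assume uv: "u \<in> V" "v \<in> V" "E u v"
    then have "c' u \<noteq> c' v" "c' u \<noteq> j" "c' v \<noteq> j" using assms(2) nj unfolding proper_col_def by auto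
    then show "c'' u \<noteq> c'' v" unfolding c''_def by simp
  qed
  then have "\<exists>c. proper_col V E (k-1) c" by blast
  then have "(LEAST k. \<exists>c. proper_col V E k c) \<le> k - 1" by (rule Least_le)
  then have "chromatic_number V E \<le> k - 1" unfolding chromatic_number_def .
  moreover have "k \<ge> 1" using assms(3) by auto
  ultimately show False using assms(1) by linarith
qed

lemma proper_comp:
  assumes "proper_col V E k d" "inj_on \<rho> {1..k}" "\<rho> ` {1..k} \<subseteq> {1..k}"
  shows "proper_col V E k (\<lambda>v. \<rho> (d v))"
  unfolding proper_col_def
proof (intro conjI ballI impI)
  fix v assume "v \<in> V"
  then have "d v \<in> {1..k}" using assms(1) unfolding proper_col_def by blast
  then show "\<rho> (d v) \<in> {1..k}" using assms(3) by blast
next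
  fix u v assume uv: "u \<in> V" "v \<in> V" "E u v"
  then have "d u \<noteq> d v" "d u \<in> {1..k}" "d v \<in> {1..k}" using assms(1) unfolding proper_col_def by auto
  then show "\<rho> (d u) \<noteq> \<rho> (d v)" using assms(2) unfolding inj_on_def by blast
qed

lemma cp_mem: "X \<in> colour_partition V k c \<longleftrightarrow> (\<exists>i\<in>{1..k}. X = {v\<in>V. c v = i}) \<and> X \<noteq> {}"
  unfolding colour_partition_def by blast

lemma kernel_of_partition:
  assumes "proper_col V E k c1" "proper_col V E k c2"
    and "colour_partition V k c1 = colour_partition V k c2" "u \<in> V" "v \<in> V"
  shows "c1 u = c1 v \<longleftrightarrow> c2 u = c2 v"
proof -
  define B where "B = {w \<in> V. c1 w = c1 u}"
  have "c1 u \<in> {1..k}" using assms(1,4) unfolding proper_col_def by blast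
  moreover have "B \<noteq> {}" using assms(4) B_def by blast
  ultimately have "B \<in> colour_partition V k c1" unfolding cp_mem B_def by (intro conjI bexI[of _ "c1 u"]) simp_all
  then have "B \<in> colour_partition V k c2" using assms(3) by simp
  then obtain i where i: "B = {w \<in> V. c2 w = i}" unfolding cp_mem by blast
  have "u \<in> B" using assms(4) B_def by simp
  then have "c2 u = i" using i by simp
  have 1: "v \<in> B \<longleftrightarrow> c1 v = c1 u" using B_def assms(5) by simp
  have 2: "v \<in> B \<longleftrightarrow> c2 v = i" using i assms(5) by simp
  show ?thesis using 1 2 \<open>c2 u = i\<close> by metis
qed
lemma partition_of_kernel_sub:
  assumes "proper_col V E k c2"
    and "\<forall>u\<in>V. \<forall>v\<in>V. c1 u = c1 v \<longleftrightarrow> c2 u = c2 v"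
  shows "colour_partition V k c1 \<subseteq> colour_partition V k c2"
proof
  fix X assume "X \<in> colour_partition V k c1"
  then obtain i where X: "X = {w \<in> V. c1 w = i}" "X \<noteq> {}" unfolding cp_mem by blast
  then obtain u where u: "u \<in> X" by blast
  then have uV: "u \<in> V" "c1 u = i" using X(1) by simp_all
  have "X = {w \<in> V. c2 w = c2 u}"
  proof (intro set_eqI iffI)
    fix w assume w: "w \<in> X"
    then have "w \<in> V" "c1 w = c1 u" using X(1) uV by simp_all
    then have "c2 w = c2 u" using assms(2) uV(1) by blast
    then show "w \<in> {w \<in> V. c2 w = c2 u}" using \<open>w \<in> V\<close> by simp
  next
    fix w assume "w \<in> {w \<in> V. c2 w = c2 u}"
    then have "w \<in> V" "c2 w = c2 u" by simp_all
    then have "c1 w = c1 u" using assms(2) uV(1) by blast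
    then show "w \<in> X" using X(1) uV \<open>w \<in> V\<close> by simp
  qed
  moreover have "c2 u \<in> {1..k}" using assms(1) uV unfolding proper_col_def by blast
  ultimately show "X \<in> colour_partition V k c2" using X(2) unfolding cp_mem by blast
qed

lemma partition_of_kernel:
  assumes "proper_col V E k c1" "proper_col V E k c2"
    and "\<forall>u\<in>V. \<forall>v\<in>V. c1 u = c1 v \<longleftrightarrow> c2 u = c2 v"
  shows "colour_partition V k c1 = colour_partition V k c2"
proof (rule subset_antisym)
  show "colour_partition V k c1 \<subseteq> colour_partition V k c2"
    using partition_of_kernel_sub[OF assms(2,3)] .
  have "\<forall>u\<in>V. \<forall>v\<in>V. c2 u = c2 v \<longleftrightarrow> c1 u = c1 v" using assms(3) by blast
  then show "colour_partition V k c2 \<subseteq> colour_partition V k c1"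
    using partition_of_kernel_sub[OF assms(1)] by blast
qed
definition sw :: "nat \<Rightarrow> nat \<Rightarrow> nat \<Rightarrow> nat" where
  "sw a b t = (if t = a then b else if t = b then a else t)"

lemma sw_perm:
  assumes "a \<in> {1..k}" "b \<in> {1..k}"
  shows "inj_on (sw a b) {1..k}" "sw a b ` {1..k} \<subseteq> {1..k}"
proof -
  show "inj_on (sw a b) {1..k}"
    by (rule inj_onI) (auto simp: sw_def split: if_splits)
  show "sw a b ` {1..k} \<subseteq> {1..k}"
    using assms by (auto simp: sw_def)
qed

theorem proposition8:
  fixes V :: "'a set" and E :: "'a \<Rightarrow> 'a \<Rightarrow> bool" and k :: nat and c :: "'a \<Rightarrow> nat"
  assumes "simple_graph V E"
    and "k = chromatic_number V E"
    and "card {colour_partition V k c' | c'. proper_col V E k c'} = 2"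
    and "proper_col V E k c"
  shows "\<exists>S. critical_set V E k c S \<and> card S = chromatic_number V E"
proof -
  have finV: "finite V" using assms(1) unfolding simple_graph_def by blast
  define P where "P = {colour_partition V k c' | c'. proper_col V E k c'}"
  have cardP: "card P = 2" using assms(3) P_def by simp
  then have finP: "finite P" by (metis card.infinite zero_neq_numeral)
  have cP: "colour_partition V k c \<in> P" using assms(4) P_def by blast
  have "\<not> P \<subseteq> {colour_partition V k c}"
  proof
    assume "P \<subseteq> {colour_partition V k c}"
    then have "card P \<le> card {colour_partition V k c}" by (intro card_mono) simp_all
    then show False using cardP by simp
  qed
  then obtain X where X: "X \<in> P" "X \<noteq> colour_partition V k c" by blast
  obtain d where d: "proper_col V E k d" "colour_partition V k d = X" using X(1) P_def by blast
  have "{colour_partition V k c, X} = P"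
    using finP cP X cardP by (intro card_subset_eq) auto
  then have Peq: "P = {colour_partition V k c, colour_partition V k d}" using d(2) by simp
  have dich: "(\<forall>u\<in>V. \<forall>v\<in>V. c' u = c' v \<longleftrightarrow> c u = c v) \<or> (\<forall>u\<in>V. \<forall>v\<in>V. c' u = c' v \<longleftrightarrow> d u = d v)"
    if c': "proper_col V E k c'" for c'
  proof -
    have "colour_partition V k c' \<in> P" using c' P_def by blast
    then have "colour_partition V k c' = colour_partition V k c \<or> colour_partition V k c' = colour_partition V k d"
      using Peq by simp
    then show ?thesis
    proof
      assume "colour_partition V k c' = colour_partition V k c"
      then show ?thesis using kernel_of_partition[OF c' assms(4)] by blast
    next
      assume "colour_partition V k c' = colour_partition V k d"
      then show ?thesis using kernel_of_partition[OF c' d(1)] by blast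
    qed
  qed
  have kerdiff: "\<exists>u\<in>V. \<exists>v\<in>V. (c u = c v) \<noteq> (d u = d v)"
  proof (rule ccontr)
    assume "\<not> ?thesis"
    then have "\<forall>u\<in>V. \<forall>v\<in>V. c u = c v \<longleftrightarrow> d u = d v" by blast
    then have "colour_partition V k c = colour_partition V k d"
      using partition_of_kernel[OF assms(4) d(1)] by blast
    then show False using X d by simp
  qed
  have crange: "\<And>v. v \<in> V \<Longrightarrow> c v \<in> {1..k}" using assms(4) unfolding proper_col_def by blast
  have drange: "\<And>v. v \<in> V \<Longrightarrow> d v \<in> {1..k}" using d(1) unfolding proper_col_def by blast
  define F where "F = (\<lambda>i. d ` {v \<in> V. c v = i})"
  have hallc: "\<forall>J. J \<subseteq> {1..k} \<longrightarrow> card J \<le> card (\<Union>(F ` J))"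
  proof (intro allI impI)
    fix J assume J: "J \<subseteq> {1..k}"
    show "card J \<le> card (\<Union>(F ` J))"
    proof (rule ccontr)
      assume lt: "\<not> card J \<le> card (\<Union>(F ` J))"
      define N where "N = \<Union>(F ` J)"
      have NF: "\<And>v. v \<in> V \<Longrightarrow> c v \<in> J \<Longrightarrow> d v \<in> N" unfolding N_def F_def by blast
      have Nsub: "N \<subseteq> {1..k}" unfolding N_def F_def using drange by blast
      have finN: "finite N" using Nsub finite_subset by blast
      have finJ: "finite J" using J finite_subset by blast
      have "card N \<le> card J" using lt N_def by simp
      then obtain g where g: "g ` N \<subseteq> J" "inj_on g N" using card_le_inj[OF finN finJ] by blast
      have "card (g ` N) < card J" using lt g(2) N_def card_image by (metis not_le)
      then have "g ` N \<noteq> J" by blast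
      then obtain j where j: "j \<in> J" "j \<notin> g ` N" using g(1) by blast
      define c' where "c' = (\<lambda>v. if c v \<in> J then g (d v) else c v)"
      have pc': "proper_col V E k c'"
        unfolding proper_col_def
      proof (intro conjI ballI impI)
        fix v assume v: "v \<in> V"
        show "c' v \<in> {1..k}"
        proof (cases "c v \<in> J")
          case True
          then have "g (d v) \<in> J" using NF v g(1) by blast
          then show ?thesis using True J unfolding c'_def by auto
        next
          case False
          then show ?thesis using crange v unfolding c'_def by simp
        qed
      next
        fix u v assume uv: "u \<in> V" "v \<in> V" "E u v"
        have cne: "c u \<noteq> c v" using assms(4) uv unfolding proper_col_def by blast
        have dne: "d u \<noteq> d v" using d(1) uv unfolding proper_col_def by blast
        show "c' u \<noteq> c' v"
        proof (cases "c u \<in> J"; cases "c v \<in> J")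
          assume a: "c u \<in> J" "c v \<in> J"
          then have "d u \<in> N" "d v \<in> N" using NF uv by auto
          then have "g (d u) \<noteq> g (d v)" using dne g(2) unfolding inj_on_def by blast
          then show ?thesis using a unfolding c'_def by simp
        next
          assume a: "c u \<in> J" "c v \<notin> J"
          then have "g (d u) \<in> J" using NF uv g(1) by blast
          then show ?thesis using a unfolding c'_def by auto
        next
          assume a: "c u \<notin> J" "c v \<in> J"
          then have "g (d v) \<in> J" using NF uv g(1) by blast
          then show ?thesis using a unfolding c'_def by auto
        next
          assume a: "c u \<notin> J" "c v \<notin> J"
          then show ?thesis using cne unfolding c'_def by simp
        qed
      qed
      have "j \<in> {1..k}" using j J by blast
      then obtain v where v: "v \<in> V" "c' v = j" using all_colours_used[OF assms(2) pc'] by blast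
      show False
      proof (cases "c v \<in> J")
        case True
        then have "c' v \<in> g ` N" using NF v(1) unfolding c'_def by simp
        then show False using v j by simp
      next
        case False
        then have "c' v = c v" unfolding c'_def by simp
        then show False using v j False by simp
      qed
    qed
  qed
  have finF: "\<forall>i\<in>{1..k}. finite (F i)" unfolding F_def using finV by simp
  have "\<exists>f. inj_on f {1..k} \<and> (\<forall>i\<in>{1..k}. f i \<in> F i)"
    using hall[OF _ finF hallc] by simp
  then obtain \<sigma> where \<sigma>: "inj_on \<sigma> {1..k}" "\<forall>i\<in>{1..k}. \<sigma> i \<in> F i"
    by blast
  have \<sigma>r: "\<sigma> ` {1..k} \<subseteq> {1..k}"
  proof (rule image_subsetI)
    fix m assume "m \<in> {1..k}"
    then obtain v where "v \<in> V" "\<sigma> m = d v" using \<sigma>(2) unfolding F_def by blast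
    then show "\<sigma> m \<in> {1..k}" using drange by simp
  qed
  have \<sigma>s: "\<sigma> ` {1..k} = {1..k}" by (rule endo_inj_surj[OF finite_atLeastAtMost \<sigma>r \<sigma>(1)])
  have exy: "\<forall>m\<in>{1..k}. \<exists>y. y \<in> V \<and> c y = m \<and> d y = \<sigma> m"
  proof
    fix m assume "m \<in> {1..k}"
    then have "\<sigma> m \<in> d ` {v \<in> V. c v = m}" using \<sigma>(2) unfolding F_def by simp
    then obtain y where "y \<in> V" "c y = m" "\<sigma> m = d y" by blast
    then show "\<exists>y. y \<in> V \<and> c y = m \<and> d y = \<sigma> m" by metis
  qed
  obtain x where x: "\<forall>m\<in>{1..k}. x m \<in> V \<and> c (x m) = m \<and> d (x m) = \<sigma> m"
    using bchoice[OF exy] by blast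
  have "\<exists>u\<in>V. d u \<noteq> \<sigma> (c u)"
  proof (rule ccontr)
    assume "\<not> ?thesis"
    then have ds: "\<forall>u\<in>V. d u = \<sigma> (c u)" by blast
    have "\<forall>u\<in>V. \<forall>v\<in>V. (c u = c v) = (d u = d v)"
    proof (intro ballI)
      fix u v assume uv: "u \<in> V" "v \<in> V"
      have "d u = \<sigma> (c u)" "d v = \<sigma> (c v)" using ds uv by auto
      moreover have "(\<sigma> (c u) = \<sigma> (c v)) = (c u = c v)"
        using inj_on_eq_iff[OF \<sigma>(1) crange[OF uv(1)] crange[OF uv(2)]] .
      ultimately show "(c u = c v) = (d u = d v)" by simp
    qed
    then show False using kerdiff by blast
  qed
  then obtain u where u: "u \<in> V" "d u \<noteq> \<sigma> (c u)" by blast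
  define i where "i = c u"
  define j where "j = d u"
  have iK: "i \<in> {1..k}" using crange u i_def by simp
  have jK: "j \<in> {1..k}" using drange u j_def by simp
  define \<tau> where "\<tau> = inv_into {1..k} \<sigma>"
  have \<tau>inj: "inj_on \<tau> {1..k}" unfolding \<tau>_def by (rule inj_on_inv_into[OF equalityD2[OF \<sigma>s]])
  have \<tau>r: "\<tau> ` {1..k} \<subseteq> {1..k}"
  proof (rule image_subsetI)
    fix y assume "y \<in> {1..k}"
    then have "y \<in> \<sigma> ` {1..k}" using \<sigma>s by simp
    then show "\<tau> y \<in> {1..k}" unfolding \<tau>_def by (rule inv_into_into)
  qed
  have \<tau>\<sigma>: "\<And>m. m \<in> {1..k} \<Longrightarrow> \<tau> (\<sigma> m) = m" unfolding \<tau>_def using \<sigma>(1) by simp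
  define l where "l = \<tau> j"
  have lK: "l \<in> {1..k}" using \<tau>r jK l_def by blast
  have "j \<in> \<sigma> ` {1..k}" using \<sigma>s jK by simp
  then have \<sigma>l: "\<sigma> l = j" unfolding l_def \<tau>_def by (rule f_inv_into_f)
  have li: "l \<noteq> i" using \<sigma>l u(2) i_def j_def by auto
  have xall: "x m \<in> V \<and> c (x m) = m \<and> d (x m) = \<sigma> m" if "m \<in> {1..k}" for m
    using x that by (rule bspec)
  have xV: "x m \<in> V" if "m \<in> {1..k}" for m using xall[OF that] by (elim conjE)
  have xc: "c (x m) = m" if "m \<in> {1..k}" for m using xall[OF that] by (elim conjE)
  have xd: "d (x m) = \<sigma> m" if "m \<in> {1..k}" for m using xall[OF that] by (elim conjE)
  have xinj: "inj_on x {1..k}"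
  proof (rule inj_onI)
    fix a b assume ab: "a \<in> {1..k}" "b \<in> {1..k}" "x a = x b"
    have "a = c (x a)" using xc[OF ab(1)] by (rule sym)
    also have "\<dots> = c (x b)" using ab(3) by (rule arg_cong)
    also have "\<dots> = b" using xc[OF ab(2)] .
    finally show "a = b" .
  qed
  define S where "S = insert u (x ` ({1..k} - {l}))"
  have unot: "u \<notin> x ` ({1..k} - {l})"
  proof
    assume "u \<in> x ` ({1..k} - {l})"
    then obtain m where m: "m \<in> {1..k} - {l}" "u = x m" by blast
    then have "m = i" using xc i_def by simp
    then have "d u = \<sigma> i" using m xd by simp
    then show False using u(2) i_def by simp
  qed
  have k1: "k \<ge> 1" using lK by simp
  have cardS: "card S = k"
  proof -
    have "card (x ` ({1..k} - {l})) = card ({1..k} - {l})"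
      using xinj by (intro card_image) (rule inj_on_subset, auto)
    also have "\<dots> = k - 1" using lK by simp
    finally have "card (x ` ({1..k} - {l})) = k - 1" .
    then have "card S = k - 1 + 1" unfolding S_def using unot by simp
    then show ?thesis using k1 by simp
  qed
  have SV: "S \<subseteq> V" unfolding S_def using u xV by blast
  have xS: "\<And>m. m \<in> {1..k} \<Longrightarrow> m \<noteq> l \<Longrightarrow> x m \<in> S" unfolding S_def by blast
  have det: "determining_set V E k c S"
    unfolding determining_set_def
  proof (intro conjI SV notI)
    assume "\<exists>c'. proper_col V E k c' \<and> (\<exists>v\<in>V. c' v \<noteq> c v) \<and> (\<forall>s\<in>S. c' s = c s)"
    then obtain c' v0 where c': "proper_col V E k c'" "v0 \<in> V" "c' v0 \<noteq> c v0" "\<forall>s\<in>S. c' s = c s"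
      by blast
    have c'S: "\<And>s. s \<in> S \<Longrightarrow> c' s = c s" using c'(4) by blast
    have c'range: "\<And>v. v \<in> V \<Longrightarrow> c' v \<in> {1..k}" using c'(1) unfolding proper_col_def by blast
    from dich[OF c'(1)] show False
    proof
      assume kc0: "\<forall>u\<in>V. \<forall>v\<in>V. c' u = c' v \<longleftrightarrow> c u = c v"
      have kc: "\<And>u v. u \<in> V \<Longrightarrow> v \<in> V \<Longrightarrow> c' u = c' v \<longleftrightarrow> c u = c v" using kc0 by blast
      have "c' v = c v" if v: "v \<in> V" for v
      proof (cases "c v = l")
        case False
        have cvK: "c v \<in> {1..k}" using crange[OF v] .
        have yS: "x (c v) \<in> S" using xS[OF cvK False] .
        have yV: "x (c v) \<in> V" using xV[OF cvK] .
        have cy: "c (x (c v)) = c v" using xc[OF cvK] .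
        have "c' v = c' (x (c v))" using kc[OF v yV] cy by simp
        also have "\<dots> = c (x (c v))" using c'S[OF yS] .
        finally show ?thesis using cy by simp
      next
        case True
        show ?thesis
        proof (rule ccontr)
          assume ne: "c' v \<noteq> c v"
          define m where "m = c' v"
          have mK: "m \<in> {1..k}" using c'range[OF v] m_def by simp
          have ml: "m \<noteq> l" using ne True m_def by simp
          have xmS: "x m \<in> S" using xS[OF mK ml] .
          have "c' (x m) = c (x m)" using c'S[OF xmS] .
          also have "\<dots> = m" using xc[OF mK] .
          finally have "c' (x m) = c' v" using m_def by simp
          then have "c (x m) = c v" using kc[OF xV[OF mK] v] by simp
          then show False using xc[OF mK] ml True by simp
        qed
      qed
      then show False using c'(2,3) by blast
    next
      assume kd0: "\<forall>u\<in>V. \<forall>v\<in>V. c' u = c' v \<longleftrightarrow> d u = d v"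
      have xiS: "x i \<in> S" using xS[OF iK] li by simp
      have uS: "u \<in> S" unfolding S_def by simp
      have "c' u = i" using c'S[OF uS] i_def by simp
      moreover have "c' (x i) = i" using c'S[OF xiS] xc[OF iK] by simp
      ultimately have "c' u = c' (x i)" by simp
      moreover have "c' u = c' (x i) \<longleftrightarrow> d u = d (x i)" using kd0 u(1) xV[OF iK] by blast
      ultimately have "d u = d (x i)" by simp
      then have "d u = \<sigma> i" using xd[OF iK] by simp
      then show False using u(2) i_def by simp
    qed
  qed
  have pt: "proper_col V E k (\<lambda>v. \<tau> (d v))" using proper_comp[OF d(1) \<tau>inj \<tau>r] .
  have change: "\<exists>c'. proper_col V E k c' \<and> c' s \<noteq> c s \<and> (\<forall>y\<in>S - {s}. c' y = c y)"
    if sS: "s \<in> S" for s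
  proof (cases "s = u")
    case True
    have "\<tau> (d u) \<noteq> c u" using l_def j_def li i_def by simp
    moreover have "\<forall>y\<in>S - {s}. \<tau> (d y) = c y"
    proof
      fix y assume y: "y \<in> S - {s}"
      then have "y \<in> x ` ({1..k} - {l})" unfolding S_def using True by blast
      then obtain m where m: "m \<in> {1..k}" "y = x m" by blast
      then show "\<tau> (d y) = c y" using xd[OF m(1)] xc[OF m(1)] \<tau>\<sigma>[OF m(1)] by simp
    qed
    ultimately show ?thesis using pt True by blast
  next
    case False
    then have "s \<in> x ` ({1..k} - {l})" using sS unfolding S_def by blast
    then obtain m where m: "m \<in> {1..k}" "m \<noteq> l" "s = x m" by blast
    have yform: "\<And>y. y \<in> S - {s} \<Longrightarrow> y \<noteq> u \<Longrightarrow> \<exists>m'. m' \<in> {1..k} \<and> m' \<noteq> l \<and> y = x m' \<and> m' \<noteq> m"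
    proof -
      fix y assume y: "y \<in> S - {s}" "y \<noteq> u"
      then have "y \<in> x ` ({1..k} - {l})" unfolding S_def by blast
      then obtain m' where m': "m' \<in> {1..k}" "m' \<noteq> l" "y = x m'" by blast
      have "m' \<noteq> m" using m' y m by blast
      then show "\<exists>m'. m' \<in> {1..k} \<and> m' \<noteq> l \<and> y = x m' \<and> m' \<noteq> m" using m' by blast
    qed
    show ?thesis
    proof (cases "m = i")
      case True
      have pr: "proper_col V E k (\<lambda>v. sw i l (\<tau> (d v)))"
        using proper_comp[OF pt sw_perm[OF iK lK]] .
      have "\<tau> (d s) = i" using m(3) xd[OF m(1)] \<tau>\<sigma>[OF m(1)] True by simp
      then have "sw i l (\<tau> (d s)) = l" by (simp add: sw_def)
      moreover have "c s = i" using m(3) xc[OF m(1)] True by simp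
      ultimately have "sw i l (\<tau> (d s)) \<noteq> c s" using li by simp
      moreover have "\<forall>y\<in>S - {s}. sw i l (\<tau> (d y)) = c y"
      proof
        fix y assume y: "y \<in> S - {s}"
        show "sw i l (\<tau> (d y)) = c y"
        proof (cases "y = u")
          case True
          have "\<tau> (d y) = l" using True l_def j_def by simp
          then show ?thesis using True i_def li by (simp add: sw_def)
        next
          case False
          then obtain m' where m': "m' \<in> {1..k}" "m' \<noteq> l" "y = x m'" "m' \<noteq> m" using yform[OF y] by blast
          have "\<tau> (d y) = m'" using m' xd[OF m'(1)] \<tau>\<sigma>[OF m'(1)] by simp
          moreover have "c y = m'" using m' xc[OF m'(1)] by simp
          ultimately show ?thesis using m'(2,4) True by (simp add: sw_def)
        qed
      qed
      ultimately show ?thesis using pr by blast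
    next
      case False
      have pr: "proper_col V E k (\<lambda>v. sw m l (c v))"
        using proper_comp[OF assms(4) sw_perm[OF m(1) lK]] .
      have "c s = m" using m(3) xc[OF m(1)] by simp
      then have "sw m l (c s) \<noteq> c s" using m(2) by (simp add: sw_def)
      moreover have "\<forall>y\<in>S - {s}. sw m l (c y) = c y"
      proof
        fix y assume y: "y \<in> S - {s}"
        show "sw m l (c y) = c y"
        proof (cases "y = u")
          case True
          then have "c y = i" using i_def by simp
          then show ?thesis using False li by (auto simp add: sw_def)
        next
          case False
          then obtain m' where m': "m' \<in> {1..k}" "m' \<noteq> l" "y = x m'" "m' \<noteq> m" using yform[OF y] by blast
          have "c y = m'" using m' xc[OF m'(1)] by simp
          then show ?thesis using m'(2,4) by (simp add: sw_def)
        qed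
      qed
      ultimately show ?thesis using pr by blast
    qed
  qed
  have "critical_set V E k c S"
    unfolding critical_set_def
  proof (intro conjI det allI impI)
    fix T assume T: "T \<subset> S"
    then obtain s where s: "s \<in> S" "s \<notin> T" by blast
    obtain c' where c': "proper_col V E k c'" "c' s \<noteq> c s" "\<forall>y\<in>S - {s}. c' y = c y"
      using change[OF s(1)] by blast
    have "\<forall>t\<in>T. c' t = c t" using c'(3) T s by blast
    moreover have "s \<in> V" using SV s by blast
    ultimately show "\<not> determining_set V E k c T"
      unfolding determining_set_def using c' by blast
  qed
  then show ?thesis using cardS assms(2) by blast
qed

end
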